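(* For every integer $n\ge2$, let $\mathbb{R}^{1,n}$ denote $(n+1)$-dimensional Minkowski space with its causal order. Then $\dim_{DM}(\mathbb{R}^{1,n})=\dim_{HBG}(\mathbb{R}^{1,n})=\aleph_0$, and for all $p,q\in\mathbb{R}^{1,n}$ with $p\ll q$ also $\dim_{DM}(J(p,q))=\dim_{HBG}(J(p,q))=\aleph_0$ (with the induced order). Moreover $\dim_D(\mathbb{R}^{1,n})\ge\aleph_0$ and $\dim_D(J(p,q))\ge\aleph_0$.
   Context: On $\mathbb{R}^{1,n}=\mathbb{R}\times\mathbb{R}^n$ the causal order is $x\le y$ iff $y_0-x_0\ge|\vec y-\vec x|$ (Euclidean norm of the spatial parts); $x\ll y$ iff $y_0-x_0>|\vec y-\vec x|$; $J(p,q):=\{x:p\le x\le q\}$. For a partially ordered set $(X,\le)$: the Dushnik–Miller dimension $\dim_{DM}(X)$ is the least cardinality of a family of total orders on $X$ whose intersection is $\le$. A utility on $X$ is a map $f:X\to\mathbb{R}^I$ with $x\le y\iff f_i(x)\le f_i(y)$ for all $i\in I$; the Hack–Braun–Gottwald dimension $\dim_{HBG}(X)$ is the least cardinality $\#I$ of a utility. A total order on $X$ is Debreu separable if there is a countable $N\subset X$ such that whenever $x\le y$ there is $n\in N$ with $x\le n\le y$; the Debreu dimension $\dim_D(X)$ is the least cardinality of a family of Debreu separable total orders on $X$ whose intersection is $\le$. *)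

theory Defs
  imports "HOL-Analysis.Analysis"
begin

definition DM_realizer :: "'a set \<Rightarrow> ('a \<Rightarrow> 'a \<Rightarrow> bool) \<Rightarrow> ('a \<times> 'a) set set \<Rightarrow> bool" where
  "DM_realizer X le F \<longleftrightarrow>
     (\<forall>R\<in>F. linear_order_on X R) \<and>
     (\<forall>x\<in>X. \<forall>y\<in>X. le x y \<longleftrightarrow> (\<forall>R\<in>F. (x, y) \<in> R))"

definition utility :: "'a set \<Rightarrow> ('a \<Rightarrow> 'a \<Rightarrow> bool) \<Rightarrow> ('a \<Rightarrow> real) set \<Rightarrow> bool" where
  "utility X le U \<longleftrightarrow> (\<forall>x\<in>X. \<forall>y\<in>X. le x y \<longleftrightarrow> (\<forall>u\<in>U. u x \<le> u y))"

definition Debreu_separable :: "'a set \<Rightarrow> ('a \<times> 'a) set \<Rightarrow> bool" where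
  "Debreu_separable X R \<longleftrightarrow>
     (\<exists>N. N \<subseteq> X \<and> countable N \<and>
        (\<forall>x\<in>X. \<forall>y\<in>X. (x, y) \<in> R \<and> x \<noteq> y \<longrightarrow> (\<exists>n\<in>N. (x, n) \<in> R \<and> (n, y) \<in> R)))"

definition Debreu_realizer :: "'a set \<Rightarrow> ('a \<Rightarrow> 'a \<Rightarrow> bool) \<Rightarrow> ('a \<times> 'a) set set \<Rightarrow> bool" where
  "Debreu_realizer X le F \<longleftrightarrow> DM_realizer X le F \<and> (\<forall>R\<in>F. Debreu_separable X R)"

text \<open>The least cardinality of a member of S equals aleph_0: some member is countably
  infinite and every member is infinite.\<close>
definition least_card_aleph0 :: "'b set set \<Rightarrow> bool" where
  "least_card_aleph0 S \<longleftrightarrow> (\<exists>A\<in>S. countable A \<and> infinite A) \<and> (\<forall>A\<in>S. infinite A)"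

definition least_card_ge_aleph0 :: "'b set set \<Rightarrow> bool" where
  "least_card_ge_aleph0 S \<longleftrightarrow> (\<forall>A\<in>S. infinite A)"

abbreviation dim_DM_eq_aleph0 :: "'a set \<Rightarrow> ('a \<Rightarrow> 'a \<Rightarrow> bool) \<Rightarrow> bool" where
  "dim_DM_eq_aleph0 X le \<equiv> least_card_aleph0 {F. DM_realizer X le F}"

abbreviation dim_HBG_eq_aleph0 :: "'a set \<Rightarrow> ('a \<Rightarrow> 'a \<Rightarrow> bool) \<Rightarrow> bool" where
  "dim_HBG_eq_aleph0 X le \<equiv> least_card_aleph0 {U. utility X le U}"

abbreviation dim_D_ge_aleph0 :: "'a set \<Rightarrow> ('a \<Rightarrow> 'a \<Rightarrow> bool) \<Rightarrow> bool" where
  "dim_D_ge_aleph0 X le \<equiv> least_card_ge_aleph0 {F. Debreu_realizer X le F}"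

definition causal_le :: "real \<times> (real^'n) \<Rightarrow> real \<times> (real^'n) \<Rightarrow> bool" where
  "causal_le x y \<longleftrightarrow> fst y - fst x \<ge> norm (snd y - snd x)"

definition chrono_less :: "real \<times> (real^'n) \<Rightarrow> real \<times> (real^'n) \<Rightarrow> bool" where
  "chrono_less x y \<longleftrightarrow> fst y - fst x > norm (snd y - snd x)"

definition causal_diamond :: "real \<times> (real^'n) \<Rightarrow> real \<times> (real^'n) \<Rightarrow> (real \<times> (real^'n)) set" where
  "causal_diamond p q = {x. causal_le p x \<and> causal_le x q}"

end

theory Submission
  imports Defs
begin


lemma causal_scale:
  fixes m x y :: "real \<times> (real^'n)"
  assumes "l > 0"
  shows "causal_le (m + l *\<^sub>R x) (m + l *\<^sub>R y) \<longleftrightarrow> causal_le x y"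
proof -
  have "snd (m + l *\<^sub>R y) - snd (m + l *\<^sub>R x) = l *\<^sub>R (snd y - snd x)"
    by (simp add: algebra_simps)
  moreover have "fst (m + l *\<^sub>R y) - fst (m + l *\<^sub>R x) = l * (fst y - fst x)"
    by (simp add: algebra_simps)
  ultimately show ?thesis unfolding causal_le_def using assms by simp
qed

lemma lin_aux1: fixes A N n f F l :: real
  assumes "A \<le> N / 2 + l * n" "- (l * f) \<le> l * \<bar>f\<bar>" "l * \<bar>f\<bar> + l * n \<le> l * 3" "6 * l \<le> F - N"
  shows "A \<le> F / 2 + l * f"
  using assms by linarith

lemma lin_aux2: fixes A N n f F l :: real
  assumes "A \<le> N / 2 + l * n" "l * f \<le> l * \<bar>f\<bar>" "l * \<bar>f\<bar> + l * n \<le> l * 3" "6 * l \<le> F - N"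
  shows "A \<le> F / 2 - l * f"
  using assms by linarith

lemma in_diamond:
  fixes p q z :: "real \<times> (real^'n)"
  assumes l: "l > 0" "6 * l \<le> fst q - fst p - norm (snd q - snd p)"
    and z: "\<bar>fst z\<bar> + norm (snd z) \<le> 3"
  shows "(1/2) *\<^sub>R (p + q) + l *\<^sub>R z \<in> causal_diamond p q"
proof -
  let ?x = "(1/2) *\<^sub>R (p + q) + l *\<^sub>R z"
  let ?N = "norm (snd q - snd p)"
  have k1a: "- (l * fst z) \<le> l * \<bar>fst z\<bar>" using l(1) mult_left_mono[of "- fst z" "\<bar>fst z\<bar>" l] by simp
  have k1b: "l * fst z \<le> l * \<bar>fst z\<bar>" using l(1) by (intro mult_left_mono) auto
  note k1 = k1a k1b
  have k2': "l * (\<bar>fst z\<bar> + norm (snd z)) \<le> l * 3" using l(1) z by (intro mult_left_mono) auto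
  then have k2: "l * \<bar>fst z\<bar> + l * norm (snd z) \<le> l * 3" by (simp add: distrib_left)
  have e1: "snd ?x - snd p = (1/2) *\<^sub>R (snd q - snd p) + l *\<^sub>R snd z" by (simp add: vec_eq_iff field_simps)
  have e2: "snd q - snd ?x = (1/2) *\<^sub>R (snd q - snd p) - l *\<^sub>R snd z" by (simp add: vec_eq_iff field_simps)
  have n1: "norm (snd ?x - snd p) \<le> ?N / 2 + l * norm (snd z)"
    unfolding e1 using norm_triangle_ineq[of "(1/2) *\<^sub>R (snd q - snd p)" "l *\<^sub>R snd z"] l(1) by simp
  have n2: "norm (snd q - snd ?x) \<le> ?N / 2 + l * norm (snd z)"
    unfolding e2 using norm_triangle_ineq4[of "(1/2) *\<^sub>R (snd q - snd p)" "l *\<^sub>R snd z"] l(1) by simp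
  have f1: "fst ?x - fst p = (fst q - fst p) / 2 + l * fst z" by (simp add: field_simps)
  have f2: "fst q - fst ?x = (fst q - fst p) / 2 - l * fst z" by (simp add: field_simps)
  have "causal_le p ?x" unfolding causal_le_def f1 by (rule lin_aux1[OF n1 k1a k2 l(2)])
  moreover have "causal_le ?x q" unfolding causal_le_def f2 by (rule lin_aux2[OF n2 k1b k2 l(2)])
  ultimately show ?thesis unfolding causal_diamond_def by simp
qed

lemma two_idx: assumes "CARD('n::finite) \<ge> 2" shows "\<exists>i1 i2 :: 'n. i1 \<noteq> i2"
proof (rule ccontr)
  assume "\<not> ?thesis"
  then have "\<forall>x y::'n. x = y" by blast
  then have "card (UNIV :: 'n set) \<le> 1" using card_le_Suc0_iff_eq[of "UNIV::'n set"] by simp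
  then show False using assms by simp
qed

lemma unit_inner_lt:
  fixes x y :: "'a::real_inner"
  assumes "inner x x = 1" "inner y y = 1" "x \<noteq> y"
  shows "inner x y < 1"
proof -
  have "0 < inner (x - y) (x - y)" using assms(3) by simp
  also have "inner (x - y) (x - y) = 2 - 2 * inner x y" using assms(1,2)
    by (simp add: inner_diff_left inner_diff_right inner_commute)
  finally show ?thesis by simp
qed

definition std_ex :: "'a set \<Rightarrow> ('a \<Rightarrow> 'a \<Rightarrow> bool) \<Rightarrow> bool" where
  "std_ex X le \<longleftrightarrow> (\<forall>k::nat. \<exists>a b. (\<forall>i<k. a i \<in> X \<and> b i \<in> X)
     \<and> (\<forall>i<k. \<forall>j<k. i \<noteq> j \<longrightarrow> le (a i) (b j)) \<and> (\<forall>i<k. \<not> le (a i) (b i)))"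

lemma std_ex_diamond:
  fixes p q :: "real \<times> (real^'n::finite)"
  assumes card: "CARD('n) \<ge> 2" and pq: "chrono_less p q"
  shows "std_ex (causal_diamond p q) causal_le"
  unfolding std_ex_def
proof
  fix k :: nat
  obtain i1 i2 :: 'n where i12: "i1 \<noteq> i2" using two_idx[OF card] by blast
  define c where "c n = (1 - (real n)^2) / (1 + (real n)^2)" for n :: nat
  define s where "s n = 2 * real n / (1 + (real n)^2)" for n :: nat
  define v where "v n = c n *\<^sub>R axis i1 (1::real) + s n *\<^sub>R axis i2 1" for n
  have inner_v: "inner (v i) (v j) = c i * c j + s i * s j" for i j
    unfolding v_def using i12
    by (simp add: inner_add_left inner_add_right inner_axis_axis)
  have cs: "c n * c n + s n * s n = 1" for n
  proof -
    define t where "t = real n"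
    have d: "(1 + t^2) * (1 + t^2) \<noteq> 0" by (smt (verit) zero_le_power2 mult_pos_pos)
    have "c n * c n + s n * s n = ((1 - t^2) * (1 - t^2) + (2 * t) * (2 * t)) / ((1 + t^2) * (1 + t^2))"
      unfolding c_def s_def t_def by (simp add: add_divide_distrib)
    also have "(1 - t^2) * (1 - t^2) + (2 * t) * (2 * t) = (1 + t^2) * (1 + t^2)"
      by (simp add: algebra_simps power2_eq_square)
    finally show ?thesis using d by simp
  qed
  have unit: "inner (v n) (v n) = 1" for n using inner_v cs by simp
  have nv: "norm (v n) = 1" for n using unit by (simp add: norm_eq_sqrt_inner)
  have vc: "inner (v n) (axis i1 1) = c n" for n
    unfolding v_def using i12 by (simp add: inner_add_left inner_axis_axis)
  have cinj: "i = j" if "c i = c j" for i j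
  proof -
    have d1: "(1 + (real i)^2) > 0" "(1 + (real j)^2) > 0" by (smt (verit) zero_le_power2)+
    have "(1 - (real i)^2) * (1 + (real j)^2) = (1 - (real j)^2) * (1 + (real i)^2)"
      using that d1 unfolding c_def by (simp add: field_simps)
    then have "(real i)^2 = (real j)^2" by (simp add: algebra_simps)
    then show ?thesis by simp
  qed
  have vinj: "i = j" if "v i = v j" for i j using vc[of i] vc[of j] that cinj by simp
  have vlt: "inner (v i) (v j) < 1" if "i \<noteq> j" for i j
    using unit_inner_lt[OF unit unit] vinj that by blast
  define S where "S = (\<lambda>(i, j). inner (v i) (v j)) ` {(i, j). i < k \<and> j < k \<and> i \<noteq> j}"
  define M where "M = Max (insert 0 S)"
  have finS: "finite S" unfolding S_def
    by (rule finite_imageI, rule finite_subset[of _ "{..<k} \<times> {..<k}"]) auto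
  have M1: "M < 1" unfolding M_def using finS vlt by (auto simp: S_def)
  have M0: "0 \<le> M" unfolding M_def using finS by simp
  have MS: "inner (v i) (v j) \<le> M" if "i < k" "j < k" "i \<noteq> j" for i j
  proof -
    have "inner (v i) (v j) \<in> S" unfolding S_def using that by force
    then show ?thesis unfolding M_def using finS by simp
  qed
  define r where "r = sqrt (2 + 2 * M)"
  have r0: "0 \<le> r" unfolding r_def using M0 by simp
  have r2: "r < 2"
  proof -
    have "r^2 = 2 + 2 * M" unfolding r_def using M0 by simp
    then have "r^2 < 2^2" using M1 by simp
    then show ?thesis by (rule power2_less_imp_less) simp
  qed
  have nsum: "norm (- v j - v i) = sqrt (2 + 2 * inner (v i) (v j))" for i j
  proof -
    have "- v j - v i = - (v i + v j)" by simp
    then have "norm (- v j - v i) = norm (v i + v j)" by (simp only: norm_minus_cancel)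
    also have "\<dots> = sqrt (inner (v i + v j) (v i + v j))" by (simp add: norm_eq_sqrt_inner)
    also have "inner (v i + v j) (v i + v j) = 2 + 2 * inner (v i) (v j)"
      using unit[of i] unit[of j] by (simp add: inner_add_left inner_add_right inner_commute)
    finally show ?thesis .
  qed
  define A where "A i = (0::real, v i)" for i
  define B where "B j = (r, - v j)" for j
  have AB: "causal_le (A i) (B j)" if "i < k" "j < k" "i \<noteq> j" for i j
  proof -
    have "sqrt (2 + 2 * inner (v i) (v j)) \<le> r" unfolding r_def using MS[OF that] by simp
    then show ?thesis unfolding causal_le_def A_def B_def using nsum by simp
  qed
  have nAB: "\<not> causal_le (A i) (B i)" for i
  proof -
    have "- v i - v i = - (2 *\<^sub>R v i)" by (simp add: scaleR_2)
    then have "norm (- v i - v i) = 2" using nv[of i] by (simp only: norm_minus_cancel norm_scaleR)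
    then show ?thesis unfolding causal_le_def A_def B_def using r2 by simp
  qed
  define gap where "gap = fst q - fst p - norm (snd q - snd p)"
  have gap0: "gap > 0" using pq unfolding chrono_less_def gap_def by simp
  define l where "l = gap / 6"
  have l0: "l > 0" and l6: "6 * l \<le> fst q - fst p - norm (snd q - snd p)" using gap0 unfolding l_def gap_def by auto
  define m where "m = (1/2) *\<^sub>R (p + q)"
  define a where "a i = m + l *\<^sub>R A i" for i
  define b where "b i = m + l *\<^sub>R B i" for i
  have "\<forall>i<k. a i \<in> causal_diamond p q \<and> b i \<in> causal_diamond p q"
  proof (intro allI impI conjI)
    fix i
    show "a i \<in> causal_diamond p q" unfolding a_def m_def
      by (rule in_diamond[OF l0 l6]) (simp add: A_def nv)
    show "b i \<in> causal_diamond p q" unfolding b_def m_def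
      by (rule in_diamond[OF l0 l6]) (use r0 r2 nv in \<open>simp add: B_def\<close>)
  qed
  moreover have "\<forall>i<k. \<forall>j<k. i \<noteq> j \<longrightarrow> causal_le (a i) (b j)"
  proof (intro allI impI)
    fix i j assume ij: "i < k" "j < k" "i \<noteq> j"
    show "causal_le (a i) (b j)" unfolding a_def b_def
      using causal_scale[OF l0, of m "A i" "B j"] AB[OF ij] by blast
  qed
  moreover have "\<forall>i<k. \<not> causal_le (a i) (b i)"
  proof (intro allI impI)
    fix i assume "i < k"
    show "\<not> causal_le (a i) (b i)" unfolding a_def b_def
      using causal_scale[OF l0, of m "A i" "B i"] nAB[of i] by blast
  qed
  ultimately show "\<exists>a b. (\<forall>i<k. a i \<in> causal_diamond p q \<and> b i \<in> causal_diamond p q)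
     \<and> (\<forall>i<k. \<forall>j<k. i \<noteq> j \<longrightarrow> causal_le (a i) (b j)) \<and> (\<forall>i<k. \<not> causal_le (a i) (b i))"
    by blast
qed



lemma dense_dirs: "\<exists>D1 :: (real^'n) set. countable D1 \<and> (\<forall>e\<in>D1. norm e \<le> 1) \<and>
    (\<forall>w t. norm w > t \<longrightarrow> (\<exists>e\<in>D1. inner e w > t))"
proof -
  obtain D :: "(real^'n) set" where D: "countable D" "\<And>X. open X \<Longrightarrow> X \<noteq> {} \<Longrightarrow> \<exists>d\<in>D. d \<in> X"
    using countable_dense_exists by metis
  define D1 where "D1 = D \<inter> cball 0 1"
  have "\<exists>e\<in>D1. inner e w > t" if wt: "norm w > t" for w :: "real^'n" and t :: real
  proof -
    define Op where "Op = ball 0 1 \<inter> {e. inner e w > t}"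
    have op: "open Op" unfolding Op_def
    proof -
      have "{e. inner e w > t} = {e. inner w e > t}" by (simp add: inner_commute)
      then show "open (ball 0 1 \<inter> {e. inner e w > t})"
        using open_halfspace_gt[of t w] by (metis open_Int open_ball)
    qed
    have ne: "Op \<noteq> {}"
    proof (cases "t < 0")
      case True then have "0 \<in> Op" unfolding Op_def by auto
      then show ?thesis by auto
    next
      case False
      then have wpos: "norm w > 0" using wt by auto
      define s where "s = (t / norm w + 1) / 2"
      have s0: "0 \<le> s" using False wpos unfolding s_def by auto
      have s1: "s < 1" using wt wpos unfolding s_def by (simp add: field_simps)
      define e where "e = (s / norm w) *\<^sub>R w"
      have "norm e = s" unfolding e_def using wpos s0 by simp
      moreover have "inner e w = s * norm w" unfolding e_def using wpos
        by (simp add: power2_norm_eq_inner[symmetric] power2_eq_square)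
      moreover have "s * norm w > t" unfolding s_def using wt wpos by (simp add: field_simps)
      ultimately have "e \<in> Op" unfolding Op_def using s1 by simp
      then show ?thesis by auto
    qed
    obtain d where "d \<in> D" "d \<in> Op" using D(2)[OF op ne] by auto
    then show ?thesis unfolding D1_def Op_def by auto
  qed
  moreover have "countable D1" using D(1) unfolding D1_def by simp
  moreover have "\<forall>e\<in>D1. norm e \<le> 1" unfolding D1_def by auto
  ultimately show ?thesis by blast
qed

definition uf :: "real^'n \<Rightarrow> real \<times> (real^'n) \<Rightarrow> real" where
  "uf e x = fst x - inner e (snd x)"

lemma uf_le: assumes "norm e \<le> 1" "causal_le x y" shows "uf e x \<le> uf e y"
proof -
  have "inner e (snd y - snd x) \<le> norm e * norm (snd y - snd x)" by (rule norm_cauchy_schwarz)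
  also have "\<dots> \<le> norm (snd y - snd x)" using assms(1)
    by (simp add: mult_left_le_one_le)
  also have "\<dots> \<le> fst y - fst x" using assms(2) unfolding causal_le_def by simp
  finally show ?thesis unfolding uf_def by (simp add: inner_diff_right)
qed

lemma uf_lt: assumes "\<not> causal_le x y" "\<And>w t. norm w > t \<Longrightarrow> \<exists>e\<in>D1. inner e w > t"
  shows "\<exists>e\<in>D1. uf e y < uf e x"
proof -
  have "norm (snd y - snd x) > fst y - fst x" using assms(1) unfolding causal_le_def by simp
  then obtain e where "e \<in> D1" "inner e (snd y - snd x) > fst y - fst x" using assms(2) by blast
  then have "uf e y < uf e x" unfolding uf_def by (simp add: inner_diff_right)
  then show ?thesis using \<open>e \<in> D1\<close> by blast
qed

lemma countable_utility:
  fixes X :: "(real \<times> (real^'n)) set"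
  shows "\<exists>U. utility X causal_le U \<and> countable U"
proof -
  obtain D1 :: "(real^'n) set" where D1: "countable D1" "\<forall>e\<in>D1. norm e \<le> 1"
    "\<forall>w t. norm w > t \<longrightarrow> (\<exists>e\<in>D1. inner e w > t)" using dense_dirs by blast
  have "utility X causal_le (uf ` D1)"
    unfolding utility_def
  proof (intro ballI)
    fix x y :: "real \<times> (real^'n)"
    have 1: "\<forall>u\<in>uf ` D1. u x \<le> u y" if "causal_le x y" using that uf_le D1(2) by blast
    have 2: "causal_le x y" if a: "\<forall>u\<in>uf ` D1. u x \<le> u y"
    proof (rule ccontr)
      assume "\<not> causal_le x y"
      then obtain e where "e \<in> D1" "uf e y < uf e x" using uf_lt[OF _ D1(3)[rule_format]] by blast
      then show False using a by force
    qed
    show "causal_le x y \<longleftrightarrow> (\<forall>u\<in>uf ` D1. u x \<le> u y)" using 1 2 by blast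
  qed
  then show ?thesis using D1(1) by blast
qed

lemma countable_realizer:
  fixes X :: "(real \<times> (real^'n)) set"
  shows "\<exists>F. DM_realizer X causal_le F \<and> countable F"
proof -
  obtain D1 :: "(real^'n) set" where D1: "countable D1" "\<forall>e\<in>D1. norm e \<le> 1"
    "\<forall>w t. norm w > t \<longrightarrow> (\<exists>e\<in>D1. inner e w > t)" using dense_dirs by blast
  obtain W :: "(real \<times> (real^'n)) rel" where W: "Well_order W" "Field W = UNIV"
    using well_ordering[where 'a="real \<times> (real^'n)"] by (elim exE conjE)
  have Wl: "linear_order_on UNIV W" using W unfolding well_order_on_def by simp
  have Wr: "(x, x) \<in> W" for x using Wl unfolding linear_order_on_def partial_order_on_def preorder_on_def refl_on_def by (cases x) auto
  have Wt: "trans W" and Wa: "antisym W" and Wtot: "total_on UNIV W"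
    using Wl unfolding linear_order_on_def partial_order_on_def preorder_on_def by auto
  define L where "L e = {(x, y). x \<in> X \<and> y \<in> X \<and> (uf e x < uf e y \<or> (uf e x = uf e y \<and>
      (fst x < fst y \<or> (fst x = fst y \<and> (x, y) \<in> W))))}" for e
  have lin: "linear_order_on X (L e)" for e
  proof -
    have "L e \<subseteq> X \<times> X" unfolding L_def by auto
    moreover have "refl_on X (L e)" unfolding L_def refl_on_def using Wr by auto
    moreover have "trans (L e)"
    proof (rule transI)
      fix x y z assume xy: "(x, y) \<in> L e" and yz: "(y, z) \<in> L e"
      have "(x, z) \<in> W" if "(x, y) \<in> W" "(y, z) \<in> W" using that Wt by (meson transD)
      then show "(x, z) \<in> L e" using xy yz unfolding L_def by auto
    qed
    moreover have "antisym (L e)"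
    proof (rule antisymI)
      fix x y assume xy: "(x, y) \<in> L e" and yx: "(y, x) \<in> L e"
      have "x = y" if "(x, y) \<in> W" "(y, x) \<in> W" using that Wa by (meson antisymD)
      then show "x = y" using xy yx unfolding L_def by auto
    qed
    moreover have "total_on X (L e)" unfolding total_on_def
    proof (intro ballI impI)
      fix x y assume "x \<in> X" "y \<in> X" "x \<noteq> y"
      then have "(x, y) \<in> W \<or> (y, x) \<in> W" using Wtot unfolding total_on_def by blast
      then show "(x, y) \<in> L e \<or> (y, x) \<in> L e" using \<open>x \<in> X\<close> \<open>y \<in> X\<close> unfolding L_def by auto
    qed
    ultimately show ?thesis unfolding linear_order_on_def partial_order_on_def preorder_on_def by auto
  qed
  have fwd: "(x, y) \<in> L e" if "x \<in> X" "y \<in> X" "causal_le x y" "e \<in> D1" for x y e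
  proof -
    have le: "uf e x \<le> uf e y" using uf_le[of e x y] D1(2) that by blast
    have f: "fst x \<le> fst y" using that(3) unfolding causal_le_def
      by (smt (verit) norm_ge_zero)
    have xy: "x = y" if "fst x = fst y"
    proof -
      have "norm (snd y - snd x) \<le> 0" using \<open>causal_le x y\<close> that unfolding causal_le_def by simp
      then have "snd x = snd y" by simp
      then show ?thesis using that by (simp add: prod_eq_iff)
    qed
    show ?thesis
    proof (cases "fst x = fst y")
      case True
      then have "x = y" by (rule xy)
      then show ?thesis unfolding L_def using that(1,2) Wr[of x] by simp
    next
      case False
      then have "fst x < fst y" using f by simp
      then show ?thesis unfolding L_def using that(1,2) le by auto
    qed
  qed
  have bwd: "causal_le x y" if "x \<in> X" "y \<in> X" "\<forall>e\<in>D1. (x, y) \<in> L e" for x y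
  proof (rule ccontr)
    assume "\<not> causal_le x y"
    then obtain e where "e \<in> D1" "uf e y < uf e x" using uf_lt[OF _ D1(3)[rule_format]] by blast
    then show False using that(3) unfolding L_def by auto
  qed
  have "DM_realizer X causal_le (L ` D1)"
    unfolding DM_realizer_def
  proof (intro conjI ballI)
    fix R assume "R \<in> L ` D1" then show "linear_order_on X R" using lin by blast
  next
    fix x y assume x: "x \<in> X" and y: "y \<in> X"
    show "causal_le x y \<longleftrightarrow> (\<forall>R\<in>L ` D1. (x, y) \<in> R)"
    proof
      assume "causal_le x y" then show "\<forall>R\<in>L ` D1. (x, y) \<in> R" using fwd[OF x y] by blast
    next
      assume "\<forall>R\<in>L ` D1. (x, y) \<in> R"
      then have "\<forall>e\<in>D1. (x, y) \<in> L e" by blast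
      then show "causal_le x y" by (rule bwd[OF x y])
    qed
  qed
  then show ?thesis using D1(1) by blast
qed

lemma realizer_infinite:
  assumes R: "DM_realizer X le F" and S: "std_ex X le"
  shows "infinite F"
proof
  assume fin: "finite F"
  define k where "k = Suc (card F)"
  obtain a b where ab: "\<forall>i<k. a i \<in> X \<and> b i \<in> X"
     "\<forall>i<k. \<forall>j<k. i \<noteq> j \<longrightarrow> le (a i) (b j)" "\<forall>i<k. \<not> le (a i) (b i)"
    using S unfolding std_ex_def by blast
  have lin: "\<forall>R\<in>F. linear_order_on X R" and eq: "\<forall>x\<in>X. \<forall>y\<in>X. le x y \<longleftrightarrow> (\<forall>R\<in>F. (x, y) \<in> R)"
    using R unfolding DM_realizer_def by auto
  have "\<forall>i\<in>{..<k}. \<exists>R. R \<in> F \<and> (a i, b i) \<notin> R"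
    using ab eq by auto
  then obtain f where f: "\<forall>i\<in>{..<k}. f i \<in> F \<and> (a i, b i) \<notin> f i"
    by metis
  have flip: "(y, x) \<in> R" if "linear_order_on X R" "x \<in> X" "y \<in> X" "(x, y) \<notin> R" for R x y
  proof -
    have "x \<noteq> y" using that unfolding linear_order_on_def partial_order_on_def preorder_on_def refl_on_def by auto
    then show ?thesis using that unfolding linear_order_on_def total_on_def by auto
  qed
  have inj: "inj_on f {..<k}"
  proof (rule inj_onI, rule ccontr)
    fix i j assume i: "i \<in> {..<k}" and j: "j \<in> {..<k}" and fij: "f i = f j" and ne: "i \<noteq> j"
    define R where "R = f i"
    have RF: "R \<in> F" using f i R_def by auto
    have L: "linear_order_on X R" using lin RF by auto
    then have tr: "trans R" unfolding linear_order_on_def partial_order_on_def preorder_on_def by auto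
    have 1: "(a i, b j) \<in> R" using ab i j ne eq RF by auto
    have 2: "(b j, a j) \<in> R" using flip[OF L] ab j f fij R_def by auto
    have 3: "(a j, b i) \<in> R" using ab i j ne eq RF by auto
    have "(a i, b i) \<in> R" using 1 2 3 tr by (meson transD)
    then show False using f i R_def by auto
  qed
  have "f ` {..<k} \<subseteq> F" using f by auto
  then have "card (f ` {..<k}) \<le> card F" using fin by (simp add: card_mono)
  then show False using inj card_image[OF inj] k_def by simp
qed

lemma utility_infinite:
  assumes R: "utility X le U" and S: "std_ex X le"
  shows "infinite U"
proof
  assume fin: "finite U"
  define k where "k = Suc (card U)"
  obtain a b where ab: "\<forall>i<k. a i \<in> X \<and> b i \<in> X"
     "\<forall>i<k. \<forall>j<k. i \<noteq> j \<longrightarrow> le (a i) (b j)" "\<forall>i<k. \<not> le (a i) (b i)"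
    using S unfolding std_ex_def by blast
  have eq: "\<forall>x\<in>X. \<forall>y\<in>X. le x y \<longleftrightarrow> (\<forall>u\<in>U. u x \<le> u y)"
    using R unfolding utility_def by auto
  have "\<forall>i\<in>{..<k}. \<exists>u. u \<in> U \<and> u (b i) < u (a i)"
    using ab eq by fastforce
  then obtain f where f: "\<forall>i\<in>{..<k}. f i \<in> U \<and> f i (b i) < f i (a i)"
    by metis
  have inj: "inj_on f {..<k}"
  proof (rule inj_onI, rule ccontr)
    fix i j assume i: "i \<in> {..<k}" and j: "j \<in> {..<k}" and fij: "f i = f j" and ne: "i \<noteq> j"
    define u where "u = f i"
    have RF: "u \<in> U" using f i u_def by auto
    have 1: "u (a i) \<le> u (b j)" using ab i j ne eq RF by auto
    have 2: "u (b j) < u (a j)" using ab j f fij u_def by auto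
    have 3: "u (a j) \<le> u (b i)" using ab i j ne eq RF by auto
    show False using 1 2 3 f i u_def by force
  qed
  have "f ` {..<k} \<subseteq> U" using f by auto
  then have "card (f ` {..<k}) \<le> card U" using fin by (simp add: card_mono)
  then show False using inj card_image[OF inj] k_def by simp
qed


lemma std_ex_mono: assumes S: "std_ex X le" and XY: "X \<subseteq> Y" shows "std_ex Y le"
  unfolding std_ex_def
proof
  fix k :: nat
  obtain a b where ab: "\<forall>i<k. a i \<in> X \<and> b i \<in> X"
     "\<forall>i<k. \<forall>j<k. i \<noteq> j \<longrightarrow> le (a i) (b j)" "\<forall>i<k. \<not> le (a i) (b i)"
    using S unfolding std_ex_def by blast
  have "\<forall>i<k. a i \<in> Y \<and> b i \<in> Y" using ab(1) XY by blast
  then show "\<exists>a b. (\<forall>i<k. a i \<in> Y \<and> b i \<in> Y)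
     \<and> (\<forall>i<k. \<forall>j<k. i \<noteq> j \<longrightarrow> le (a i) (b j)) \<and> (\<forall>i<k. \<not> le (a i) (b i))"
    using ab(2,3) by blast
qed

lemma dims_all:
  fixes X :: "(real \<times> (real^'n::finite)) set"
  assumes S: "std_ex X causal_le"
  shows "dim_DM_eq_aleph0 X causal_le \<and> dim_HBG_eq_aleph0 X causal_le \<and> dim_D_ge_aleph0 X causal_le"
proof -
  obtain F where F: "DM_realizer X causal_le F" "countable F" using countable_realizer by blast
  obtain U where U: "utility X causal_le U" "countable U" using countable_utility by blast
  have iF: "infinite F" by (rule realizer_infinite[OF F(1) S])
  have iU: "infinite U" by (rule utility_infinite[OF U(1) S])
  have a1: "\<forall>A\<in>{F. DM_realizer X causal_le F}. infinite A"
  proof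
    fix A assume "A \<in> {F. DM_realizer X causal_le F}"
    then have "DM_realizer X causal_le A" by simp
    then show "infinite A" by (rule realizer_infinite[OF _ S])
  qed
  have a2: "\<exists>A\<in>{F. DM_realizer X causal_le F}. countable A \<and> infinite A"
    by (rule bexI[of _ F]) (simp_all add: F iF)
  have b1: "\<forall>A\<in>{U. utility X causal_le U}. infinite A"
  proof
    fix A assume "A \<in> {U. utility X causal_le U}"
    then have "utility X causal_le A" by simp
    then show "infinite A" by (rule utility_infinite[OF _ S])
  qed
  have b2: "\<exists>A\<in>{U. utility X causal_le U}. countable A \<and> infinite A"
    by (rule bexI[of _ U]) (simp_all add: U iU)
  have c1: "\<forall>A\<in>{F. Debreu_realizer X causal_le F}. infinite A"
  proof
    fix A assume "A \<in> {F. Debreu_realizer X causal_le F}"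
    then have "DM_realizer X causal_le A" by (simp add: Debreu_realizer_def)
    then show "infinite A" by (rule realizer_infinite[OF _ S])
  qed
  show ?thesis unfolding least_card_aleph0_def least_card_ge_aleph0_def
    by (rule conjI[OF conjI[OF a2 a1] conjI[OF conjI[OF b2 b1] c1]])
qed

theorem mainTheorem5:
  assumes "CARD('n::finite) \<ge> 2"
  shows "dim_DM_eq_aleph0 (UNIV :: (real \<times> (real^'n)) set) causal_le
       \<and> dim_HBG_eq_aleph0 (UNIV :: (real \<times> (real^'n)) set) causal_le
       \<and> dim_D_ge_aleph0 (UNIV :: (real \<times> (real^'n)) set) causal_le
       \<and> (\<forall>p q :: real \<times> (real^'n). chrono_less p q \<longrightarrow>
            dim_DM_eq_aleph0 (causal_diamond p q) causal_le
          \<and> dim_HBG_eq_aleph0 (causal_diamond p q) causal_le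
          \<and> dim_D_ge_aleph0 (causal_diamond p q) causal_le)"
proof -
  have pq: "chrono_less (0 :: real \<times> (real^'n)) (1, 0)" unfolding chrono_less_def by simp
  have "std_ex (UNIV :: (real \<times> (real^'n)) set) causal_le"
    by (rule std_ex_mono[OF std_ex_diamond[OF assms pq]]) simp
  then have 1: "dim_DM_eq_aleph0 (UNIV :: (real \<times> (real^'n)) set) causal_le
       \<and> dim_HBG_eq_aleph0 (UNIV :: (real \<times> (real^'n)) set) causal_le
       \<and> dim_D_ge_aleph0 (UNIV :: (real \<times> (real^'n)) set) causal_le" by (rule dims_all)
  have 2: "\<forall>p q :: real \<times> (real^'n). chrono_less p q \<longrightarrow>
            dim_DM_eq_aleph0 (causal_diamond p q) causal_le
          \<and> dim_HBG_eq_aleph0 (causal_diamond p q) causal_le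
          \<and> dim_D_ge_aleph0 (causal_diamond p q) causal_le"
  proof (intro allI impI)
    fix p q :: "real \<times> (real^'n)" assume "chrono_less p q"
    then show "dim_DM_eq_aleph0 (causal_diamond p q) causal_le
          \<and> dim_HBG_eq_aleph0 (causal_diamond p q) causal_le
          \<and> dim_D_ge_aleph0 (causal_diamond p q) causal_le"
      by (intro dims_all std_ex_diamond[OF assms])
  qed
  note a1 = conjunct1[OF 1] and a2 = conjunct1[OF conjunct2[OF 1]] and a3 = conjunct2[OF conjunct2[OF 1]]
  show ?thesis by (rule conjI[OF a1 conjI[OF a2 conjI[OF a3 2]]])
qed

end
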